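(* There exist constants $\delta>0$ and $N^*>0$ such that for every integer $N>N^*$ there is a pure state $|\Psi\rangle\in\mathbb{S}_N$ satisfying $$\log_2\!\left(\lfloor N/2\rfloor+1\right)-E\big(|\Psi\rangle,\{\lfloor N/2\rfloor,\lceil N/2\rceil\}\big)<\delta .$$
   Context: For an integer $N\ge 1$, consider $N$ spin-1/2 particles (qubits) with Hilbert space $(\mathbb{C}^2)^{\otimes N}$. The symmetric subspace $\mathbb{S}_N\subset(\mathbb{C}^2)^{\otimes N}$ is the set of states invariant under every permutation of the $N$ qubits. It is spanned by the Dicke states $|\tilde m\rangle=\binom{N}{m}^{-1/2}\sum_{\pi}\pi\big(|1\rangle^{\otimes m}\otimes|0\rangle^{\otimes(N-m)}\big)$ for $m=0,\dots,N$, where the sum runs over the $\binom{N}{m}$ distinct arrangements. For a pure state $|\Psi\rangle$ and a bipartition of the qubits into a set $A$ of $k$ qubits and the complementary set $B$ of $N-k$ qubits, the entropy of entanglement is $E(|\Psi\rangle,\{k,N-k\})=S(\rho_A)$, where $\rho_A=\mathrm{Tr}_B|\Psi\rangle\langle\Psi|$ and $S(\rho)=-\mathrm{Tr}(\rho\log_2\rho)$. For symmetric states this quantity does not depend on which $k$ qubits are placed in $A$. *)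

theory Defs
  imports "Jordan_Normal_Form.Matrix" "Jordan_Normal_Form.Char_Poly"
    "HOL-Combinatorics.Permutations" "HOL-Computational_Algebra.Fundamental_Theorem_Algebra"
begin

(* Computational basis of N qubits: basis state |x_0 ... x_{N-1}> is encoded by the
   index i < 2^N with x_j = bit i j.  A state vector is a complex vector of dimension 2^N. *)

definition perm_index :: "(nat \<Rightarrow> nat) \<Rightarrow> nat \<Rightarrow> nat \<Rightarrow> nat" where
  "perm_index p N i = (\<Sum>j<N. if bit i (p j) then 2 ^ j else 0)"

definition pure_state :: "nat \<Rightarrow> complex vec \<Rightarrow> bool" where
  "pure_state N psi \<longleftrightarrow> dim_vec psi = 2 ^ N \<and> (\<Sum>i<2 ^ N. (cmod (psi $ i))\<^sup>2) = 1"

definition symmetric_subspace :: "nat \<Rightarrow> complex vec set" where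
  "symmetric_subspace N = {psi. dim_vec psi = 2 ^ N \<and>
     (\<forall>p. p permutes {..<N} \<longrightarrow> (\<forall>i<2 ^ N. psi $ i = psi $ perm_index p N i))}"

(* reduced density matrix rho_A = Tr_B |psi><psi| with A = the qubits 0..k-1 and
   B = the qubits k..N-1; index i = a + 2^k * b *)
definition reduced_density :: "nat \<Rightarrow> nat \<Rightarrow> complex vec \<Rightarrow> complex mat" where
  "reduced_density N k psi = mat (2 ^ k) (2 ^ k)
     (\<lambda>(a, a'). \<Sum>b<2 ^ (N - k). psi $ (a + 2 ^ k * b) * cnj (psi $ (a' + 2 ^ k * b)))"

(* von Neumann entropy S(rho) = - Tr (rho log2 rho) = - sum over the eigenvalues lambda of rho
   (with algebraic multiplicity) of lambda log2 lambda, with 0 log 0 = 0 *)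
definition vn_entropy :: "complex mat \<Rightarrow> real" where
  "vn_entropy rho = - (\<Sum>lam\<in>#proots (char_poly rho).
      (if Re lam = 0 then 0 else Re lam * log 2 (Re lam)))"

definition ent_entropy :: "nat \<Rightarrow> nat \<Rightarrow> complex vec \<Rightarrow> real" where
  "ent_entropy N k psi = vn_entropy (reduced_density N k psi)"

end

theory Submission
  imports Defs "HOL-Library.Discrete_Functions" "Jordan_Normal_Form.Schur_Decomposition"
begin

lemma sum_lessThan_add_split:
  "(\<Sum>i<m + (n::nat). f i) = (\<Sum>i<m. f i) + (\<Sum>i<n. f (m + i))"
  by (induction n) (auto simp: add.assoc)

lemma prod_lessThan_add_split:
  "(\<Prod>i<m + (n::nat). f i) = (\<Prod>i<m. f i) * (\<Prod>i<n. f (m + i))"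
  by (induction n) (auto simp: mult.assoc)

lemma sum_mult_index:
  "(\<Sum>i<p * (q::nat). f i) = (\<Sum>b<q. \<Sum>a<p. f (a + p * b))"
proof (induction q)
  case 0 then show ?case by simp
next
  case (Suc q)
  have "(\<Sum>i<p * Suc q. f i) = (\<Sum>i<p * q + p. f i)" by (simp add: add.commute)
  also have "\<dots> = (\<Sum>i<p * q. f i) + (\<Sum>i<p. f (p * q + i))" by (rule sum_lessThan_add_split)
  finally show ?case using Suc by (simp add: add.commute)
qed

lemma bit_split:
  fixes a b :: nat
  assumes "a < 2 ^ k"
  shows "bit (a + 2 ^ k * b) j = (if j < k then bit a j else bit b (j - k))"
proof -
  have ta: "take_bit k a = a" using assms by (rule take_bit_nat_eq_self)
  have pb: "2 ^ k * b = push_bit k b" by (simp add: push_bit_nat_def)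
  have disj: "\<not> bit a i \<or> \<not> bit (push_bit k b) i" for i
    using bit_take_bit_iff[of k a i] ta by (auto simp: bit_push_bit_iff_nat)
  have "bit (a + 2 ^ k * b) j = (bit a j \<or> bit (push_bit k b) j)"
    unfolding pb by (rule bit_disjunctive_add_iff[OF disj])
  also have "\<dots> = (if j < k then bit a j else bit b (j - k))"
    using bit_take_bit_iff[of k a j] ta by (auto simp: bit_push_bit_iff_nat)
  finally show ?thesis .
qed

lemma lt_mult_index:
  fixes a b :: nat
  assumes "a < p" "b < q"
  shows "a + p * b < p * q"
proof -
  have "a + p * b < p + p * b" using assms by simp
  also have "\<dots> = p * Suc b" by simp
  also have "\<dots> \<le> p * q" using assms by (intro mult_le_mono2) auto
  finally show ?thesis .
qed


lemma prod_sum_bits: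
  "(\<Sum>i<(2::nat) ^ m. \<Prod>j<m. g j (bit i j)) = (\<Prod>j<m. (g j False + g j True :: 'a :: comm_semiring_1))"
proof (induction m)
  case 0 then show ?case by (simp add: card_lessThan)
next
  case (Suc m)
  have "(\<Sum>i<(2::nat) ^ Suc m. \<Prod>j<Suc m. g j (bit i j))
      = (\<Sum>b<(2::nat). \<Sum>a<(2::nat) ^ m. \<Prod>j<Suc m. g j (bit (a + 2 ^ m * b) j))"
    using sum_mult_index[of "\<lambda>i. \<Prod>j<Suc m. g j (bit i j)" "2 ^ m" 2] by (simp only: power_Suc mult.commute)
  also have "\<dots> = (\<Sum>b<2::nat. \<Sum>a<(2::nat) ^ m. (\<Prod>j<m. g j (bit a j)) * g m (odd b))"
  proof (intro sum.cong refl)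
    fix b a assume b: "b \<in> {..<2::nat}" and a: "a \<in> {..<(2::nat) ^ m}"
    have a': "a < 2 ^ m" using a by simp
    have "(\<Prod>j<Suc m. g j (bit (a + 2 ^ m * b) j)) = (\<Prod>j<m. g j (bit (a + 2 ^ m * b) j)) * g m (bit (a + 2 ^ m * b) m)"
      by (rule prod.lessThan_Suc)
    also have "(\<Prod>j<m. g j (bit (a + 2 ^ m * b) j)) = (\<Prod>j<m. g j (bit a j))"
      by (intro prod.cong refl) (simp add: bit_split[OF a'])
    also have "bit (a + 2 ^ m * b) m = odd b"
      by (simp add: bit_split[OF a'] bit_0)
    finally show "(\<Prod>j<Suc m. g j (bit (a + 2 ^ m * b) j)) = (\<Prod>j<m. g j (bit a j)) * g m (odd b)" .
  qed
  also have "\<dots> = (\<Sum>a<(2::nat) ^ m. (\<Prod>j<m. g j (bit a j))) * g m False + (\<Sum>a<(2::nat) ^ m. (\<Prod>j<m. g j (bit a j))) * g m True"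
    by (simp add: numeral_2_eq_2 sum_distrib_right)
  also have "\<dots> = (\<Prod>j<Suc m. (g j False + g j True))"
    using Suc by (simp add: distrib_left)
  finally show ?case .
qed


lemma bit_sum_pow2:
  fixes P :: "nat \<Rightarrow> bool"
  shows "(\<Sum>j<N. if P j then 2 ^ j else 0 :: nat) < 2 ^ N \<and>
         (\<forall>m. bit (\<Sum>j<N. if P j then 2 ^ j else 0 :: nat) m = (m < N \<and> P m))"
proof (induction N)
  case 0 then show ?case by simp
next
  case (Suc N)
  let ?S = "(\<Sum>j<N. if P j then 2 ^ j else 0 :: nat)"
  have eq: "(\<Sum>j<Suc N. if P j then 2 ^ j else 0 :: nat) = ?S + 2 ^ N * (if P N then 1 else 0)"
    by simp
  have lt: "?S < 2 ^ N" using Suc by blast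
  have bS: "bit ?S m = (m < N \<and> P m)" for m using Suc by blast
  show ?case
  proof
    show "(\<Sum>j<Suc N. if P j then 2 ^ j else 0 :: nat) < 2 ^ Suc N"
      unfolding eq using lt by auto
    show "\<forall>m. bit (\<Sum>j<Suc N. if P j then 2 ^ j else 0 :: nat) m = (m < Suc N \<and> P m)"
    proof
      fix m
      show "bit (\<Sum>j<Suc N. if P j then 2 ^ j else 0 :: nat) m = (m < Suc N \<and> P m)"
      proof -
        have b1: "bit (if P N then 1 else 0 :: nat) i = (P N \<and> i = 0)" for i
          by (cases "P N"; cases i) (auto simp: bit_Suc bit_0)
        show ?thesis unfolding eq bit_split[OF lt] b1 bS using less_Suc_eq by auto
      qed
    qed
  qed
qed

lemma perm_index_lt: "perm_index p N i < 2 ^ N"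
  unfolding perm_index_def by (rule conjunct1[OF bit_sum_pow2])

lemma bit_perm_index: "bit (perm_index p N i) m = (m < N \<and> bit i (p m))"
  unfolding perm_index_def by (rule spec[OF conjunct2[OF bit_sum_pow2]])

definition amp :: "complex \<Rightarrow> bool \<Rightarrow> complex" where
  "amp z b = (if b then z else 1) / complex_of_real (sqrt (1 + (cmod z)\<^sup>2))"

definition pv :: "complex \<Rightarrow> nat \<Rightarrow> nat \<Rightarrow> complex" where
  "pv z m i = (\<Prod>j<m. amp z (bit i j))"

definition ip :: "complex \<Rightarrow> complex \<Rightarrow> complex" where
  "ip z w = amp z False * cnj (amp w False) + amp z True * cnj (amp w True)"

lemma gram_pv: "(\<Sum>i<(2::nat) ^ m. pv z m i * cnj (pv w m i)) = ip z w ^ m"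
proof -
  have "(\<Sum>i<(2::nat) ^ m. pv z m i * cnj (pv w m i))
      = (\<Sum>i<(2::nat) ^ m. \<Prod>j<m. (\<lambda>j b. amp z b * cnj (amp w b)) j (bit i j))"
    by (simp add: pv_def cnj_prod prod.distrib)
  also have "\<dots> = (\<Prod>j<m. ip z w)"
    by (subst prod_sum_bits) (simp add: ip_def add.commute)
  finally show ?thesis by simp
qed

lemma ip_formula:
  "ip z w = (1 + z * cnj w) / complex_of_real (sqrt (1 + (cmod z)\<^sup>2) * sqrt (1 + (cmod w)\<^sup>2))"
  by (simp add: ip_def amp_def add_divide_distrib)

lemma cnj_ip: "cnj (ip z w) = ip w z"
  by (simp add: ip_def mult.commute)

lemma cmod_one_plus_sq:
  "(cmod (1 + z * cnj w))\<^sup>2 = (1 + (cmod z)\<^sup>2) * (1 + (cmod w)\<^sup>2) - (cmod (z - w))\<^sup>2"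
proof -
  obtain a b where z: "z = Complex a b" by (cases z)
  obtain c d where w: "w = Complex c d" by (cases w)
  show ?thesis unfolding z w cmod_power2 by (simp add: power2_eq_square algebra_simps)
qed

lemma cmod_ip_sq:
  "(cmod (ip z w))\<^sup>2 = 1 - (cmod (z - w))\<^sup>2 / ((1 + (cmod z)\<^sup>2) * (1 + (cmod w)\<^sup>2))"
proof -
  let ?P = "(1 + (cmod z)\<^sup>2) * (1 + (cmod w)\<^sup>2)"
  have P: "?P > 0" by (intro mult_pos_pos) (auto intro: add_pos_nonneg)
  have "(cmod (ip z w))\<^sup>2 = (cmod (1 + z * cnj w))\<^sup>2 / (sqrt (1 + (cmod z)\<^sup>2) * sqrt (1 + (cmod w)\<^sup>2))\<^sup>2"
    unfolding ip_formula norm_divide power_divide by (simp add: norm_mult)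
  also have "(sqrt (1 + (cmod z)\<^sup>2) * sqrt (1 + (cmod w)\<^sup>2))\<^sup>2 = ?P"
    by (simp add: power_mult_distrib)
  also have "(cmod (1 + z * cnj w))\<^sup>2 / ?P = 1 - (cmod (z - w))\<^sup>2 / ?P"
    unfolding cmod_one_plus_sq using P by (simp add: field_simps)
  finally show ?thesis .
qed

lemma ip_self: "ip z z = 1"
proof -
  have P: "1 + (cmod z)\<^sup>2 > 0" by (simp add: add_pos_nonneg)
  have s: "sqrt (1 + (cmod z)\<^sup>2) * sqrt (1 + (cmod z)\<^sup>2) = 1 + (cmod z)\<^sup>2"
    using P by simp
  have n: "1 + z * cnj z = complex_of_real (1 + (cmod z)\<^sup>2)"
    using complex_norm_square[of z] by simp
  have "ip z z = complex_of_real (1 + (cmod z)\<^sup>2) / complex_of_real (1 + (cmod z)\<^sup>2)"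
    unfolding ip_formula s n ..
  also have "\<dots> = 1" using P by (simp del: of_real_add)
  finally show ?thesis .
qed

lemma cmod_ip_le1: "cmod (ip z w) \<le> 1"
proof -
  have "(cmod (ip z w))\<^sup>2 \<le> 1\<^sup>2"
    unfolding cmod_ip_sq by (simp add: add_pos_nonneg)
  then show ?thesis by (rule power2_le_imp_le) simp
qed

lemma cmod_sq_cnj: "complex_of_real ((cmod z)\<^sup>2) = z * cnj z"
  using complex_norm_square[of z] by simp

lemma schur_bound:
  fixes c :: "'t \<Rightarrow> complex" and G :: "'t \<Rightarrow> 't \<Rightarrow> complex"
  assumes fin: "finite T"
    and rows: "\<And>t. t \<in> T \<Longrightarrow> (\<Sum>t'\<in>T. cmod (G t t')) \<le> B"
    and cols: "\<And>t. t \<in> T \<Longrightarrow> (\<Sum>t'\<in>T. cmod (G t' t)) \<le> B"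
  shows "cmod (\<Sum>t\<in>T. \<Sum>t'\<in>T. c t * cnj (c t') * G t t') \<le> B * (\<Sum>t\<in>T. (cmod (c t))\<^sup>2)"
proof -
  let ?a = "\<lambda>t. cmod (c t)"
  have "cmod (\<Sum>t\<in>T. \<Sum>t'\<in>T. c t * cnj (c t') * G t t') \<le> (\<Sum>t\<in>T. cmod (\<Sum>t'\<in>T. c t * cnj (c t') * G t t'))"
    by (rule norm_sum)
  also have "\<dots> \<le> (\<Sum>t\<in>T. \<Sum>t'\<in>T. cmod (c t * cnj (c t') * G t t'))"
    by (intro sum_mono norm_sum)
  also have "\<dots> = (\<Sum>t\<in>T. \<Sum>t'\<in>T. ?a t * ?a t' * cmod (G t t'))"
    by (simp add: norm_mult)
  also have "\<dots> \<le> (\<Sum>t\<in>T. \<Sum>t'\<in>T. ((?a t)\<^sup>2 / 2 + (?a t')\<^sup>2 / 2) * cmod (G t t'))"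
  proof (intro sum_mono mult_right_mono)
    fix t t'
    have "0 \<le> (?a t - ?a t')\<^sup>2" by simp
    then show "?a t * ?a t' \<le> (?a t)\<^sup>2 / 2 + (?a t')\<^sup>2 / 2"
      by (simp add: power2_eq_square algebra_simps)
  qed simp
  also have "\<dots> = (\<Sum>t\<in>T. (?a t)\<^sup>2 / 2 * (\<Sum>t'\<in>T. cmod (G t t'))) + (\<Sum>t\<in>T. \<Sum>t'\<in>T. (?a t')\<^sup>2 / 2 * cmod (G t t'))"
    by (simp add: distrib_right sum.distrib sum_distrib_left)
  also have "(\<Sum>t\<in>T. \<Sum>t'\<in>T. (?a t')\<^sup>2 / 2 * cmod (G t t')) = (\<Sum>t'\<in>T. (?a t')\<^sup>2 / 2 * (\<Sum>t\<in>T. cmod (G t t')))"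
    by (subst sum.swap) (simp add: sum_distrib_left)
  also have "(\<Sum>t\<in>T. (?a t)\<^sup>2 / 2 * (\<Sum>t'\<in>T. cmod (G t t'))) \<le> (\<Sum>t\<in>T. (?a t)\<^sup>2 / 2 * B)"
    by (intro sum_mono mult_left_mono rows) auto
  also have "(\<Sum>t'\<in>T. (?a t')\<^sup>2 / 2 * (\<Sum>t\<in>T. cmod (G t t'))) \<le> (\<Sum>t'\<in>T. (?a t')\<^sup>2 / 2 * B)"
    by (intro sum_mono mult_left_mono cols) auto
  finally show ?thesis by (simp add: sum_distrib_left sum_distrib_right mult.commute sum.distrib[symmetric])
qed

lemma gram_expand:
  fixes c :: "'t \<Rightarrow> complex" and q :: "'t \<Rightarrow> 'b \<Rightarrow> complex"
  assumes "finite T" "finite S"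
  shows "complex_of_real (\<Sum>b\<in>S. (cmod (\<Sum>t\<in>T. c t * q t b))\<^sup>2)
       = (\<Sum>t\<in>T. \<Sum>t'\<in>T. c t * cnj (c t') * (\<Sum>b\<in>S. q t b * cnj (q t' b)))"
proof -
  have "complex_of_real (\<Sum>b\<in>S. (cmod (\<Sum>t\<in>T. c t * q t b))\<^sup>2)
      = (\<Sum>b\<in>S. (\<Sum>t\<in>T. c t * q t b) * cnj (\<Sum>t\<in>T. c t * q t b))"
    by (simp only: of_real_sum cmod_sq_cnj)
  also have "\<dots> = (\<Sum>b\<in>S. \<Sum>t\<in>T. \<Sum>t'\<in>T. c t * cnj (c t') * (q t b * cnj (q t' b)))"
    by (simp add: cnj_sum sum_distrib_left sum_distrib_right mult_ac) (rule sum.cong[OF refl], rule sum.swap)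
  also have "\<dots> = (\<Sum>t\<in>T. \<Sum>t'\<in>T. \<Sum>b\<in>S. c t * cnj (c t') * (q t b * cnj (q t' b)))"
    by (subst sum.swap) (simp add: sum.swap[of _ S])
  also have "\<dots> = (\<Sum>t\<in>T. \<Sum>t'\<in>T. c t * cnj (c t') * (\<Sum>b\<in>S. q t b * cnj (q t' b)))"
    by (simp add: sum_distrib_left)
  finally show ?thesis .
qed

lemma sum_sq_bound:
  fixes c :: "'t \<Rightarrow> complex" and q :: "'t \<Rightarrow> 'b \<Rightarrow> complex"
  assumes fin: "finite T" "finite S"
    and rows: "\<And>t. t \<in> T \<Longrightarrow> (\<Sum>t'\<in>T. cmod (\<Sum>b\<in>S. q t b * cnj (q t' b))) \<le> B"
    and cols: "\<And>t. t \<in> T \<Longrightarrow> (\<Sum>t'\<in>T. cmod (\<Sum>b\<in>S. q t' b * cnj (q t b))) \<le> B"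
  shows "(\<Sum>b\<in>S. (cmod (\<Sum>t\<in>T. c t * q t b))\<^sup>2) \<le> B * (\<Sum>t\<in>T. (cmod (c t))\<^sup>2)"
proof -
  have "(\<Sum>b\<in>S. (cmod (\<Sum>t\<in>T. c t * q t b))\<^sup>2) = cmod (complex_of_real (\<Sum>b\<in>S. (cmod (\<Sum>t\<in>T. c t * q t b))\<^sup>2))"
    by (subst norm_of_real) (simp add: sum_nonneg)
  also have "\<dots> = cmod (\<Sum>t\<in>T. \<Sum>t'\<in>T. c t * cnj (c t') * (\<Sum>b\<in>S. q t b * cnj (q t' b)))"
    by (simp only: gram_expand[OF fin])
  also have "\<dots> \<le> B * (\<Sum>t\<in>T. (cmod (c t))\<^sup>2)"
    by (rule schur_bound[OF fin(1) rows cols])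
  finally show ?thesis .
qed

lemma frame_bound:
  fixes v :: "'b \<Rightarrow> complex" and p :: "'t \<Rightarrow> 'b \<Rightarrow> complex"
  assumes fin: "finite T" "finite S" and Bpos: "B > 0"
    and rows: "\<And>t. t \<in> T \<Longrightarrow> (\<Sum>t'\<in>T. cmod (\<Sum>b\<in>S. p t b * cnj (p t' b))) \<le> B"
    and cols: "\<And>t. t \<in> T \<Longrightarrow> (\<Sum>t'\<in>T. cmod (\<Sum>b\<in>S. p t' b * cnj (p t b))) \<le> B"
  shows "(\<Sum>t\<in>T. (cmod (\<Sum>a\<in>S. cnj (v a) * p t a))\<^sup>2) \<le> B * (\<Sum>a\<in>S. (cmod (v a))\<^sup>2)"
proof -
  define A where "A t = (\<Sum>a\<in>S. cnj (v a) * p t a)" for t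
  define w where "w a = (\<Sum>t\<in>T. cnj (A t) * p t a)" for a
  define Sm where "Sm = (\<Sum>t\<in>T. (cmod (A t))\<^sup>2)"
  define V where "V = (\<Sum>a\<in>S. (cmod (v a))\<^sup>2)"
  have Sm0: "Sm \<ge> 0" unfolding Sm_def by (simp add: sum_nonneg)
  have wS: "(\<Sum>a\<in>S. (cmod (w a))\<^sup>2) \<le> B * Sm"
    using sum_sq_bound[OF fin rows cols, of "\<lambda>t. cnj (A t)"] unfolding w_def Sm_def by simp
  have "complex_of_real Sm = (\<Sum>t\<in>T. cnj (A t) * A t)"
    unfolding Sm_def by (simp only: of_real_sum cmod_sq_cnj mult.commute)
  also have "\<dots> = (\<Sum>a\<in>S. cnj (v a) * w a)"
    unfolding A_def w_def by (simp add: sum_distrib_left sum_distrib_right mult_ac sum.swap[of _ T])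
  finally have SmE: "complex_of_real Sm = (\<Sum>a\<in>S. cnj (v a) * w a)" .
  have "Sm = cmod (complex_of_real Sm)" using Sm0 by simp
  also have "\<dots> \<le> (\<Sum>a\<in>S. cmod (v a) * cmod (w a))"
    unfolding SmE by (rule order_trans[OF norm_sum]) (simp add: norm_mult)
  also have "\<dots> \<le> (\<Sum>a\<in>S. (B * (cmod (v a))\<^sup>2 + (cmod (w a))\<^sup>2 / B) / 2)"
  proof (rule sum_mono)
    fix a
    have "0 \<le> (B * cmod (v a) - cmod (w a))\<^sup>2" by simp
    then have "2 * B * (cmod (v a) * cmod (w a)) \<le> B * B * (cmod (v a))\<^sup>2 + (cmod (w a))\<^sup>2"
      by (simp add: power2_eq_square algebra_simps)
    then show "cmod (v a) * cmod (w a) \<le> (B * (cmod (v a))\<^sup>2 + (cmod (w a))\<^sup>2 / B) / 2"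
      using Bpos by (simp add: field_simps)
  qed
  also have "\<dots> = (B * V + (\<Sum>a\<in>S. (cmod (w a))\<^sup>2) / B) / 2"
    unfolding V_def by (simp add: sum.distrib sum_distrib_left sum_divide_distrib add_divide_distrib)
  also have "\<dots> \<le> (B * V + Sm) / 2"
    using wS Bpos by (simp add: field_simps)
  finally have "Sm \<le> B * V" by simp
  then show ?thesis unfolding Sm_def V_def A_def .
qed

lemma geo1:
  fixes r :: real
  assumes "0 \<le> r" "r < 1"
  shows "(\<Sum>x'\<le>x. r ^ (x - x')) \<le> 1 / (1 - r)"
proof (induction x)
  case 0 then show ?case using assms by (simp add: field_simps)
next
  case (Suc x)
  have "(\<Sum>x'\<le>Suc x. r ^ (Suc x - x')) = (\<Sum>x'\<le>x. r ^ (Suc x - x')) + 1" by simp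
  also have "(\<Sum>x'\<le>x. r ^ (Suc x - x')) = r * (\<Sum>x'\<le>x. r ^ (x - x'))"
    by (simp add: sum_distrib_left Suc_diff_le)
  also have "r * (\<Sum>x'\<le>x. r ^ (x - x')) \<le> r * (1 / (1 - r))"
    using Suc assms by (intro mult_left_mono) auto
  also have "r * (1 / (1 - r)) + 1 = 1 / (1 - r)" using assms by (simp add: field_simps)
  finally show ?case by simp
qed

lemma geo2:
  fixes r :: real
  assumes "0 \<le> r" "r < 1"
  shows "(\<Sum>i<K. r ^ i) \<le> 1 / (1 - r)"
proof -
  have "(\<Sum>i<K. r ^ i) = (1 - r ^ K) / (1 - r)" using assms by (simp add: sum_gp_strict)
  also have "\<dots> \<le> 1 / (1 - r)" using assms by (intro divide_right_mono) auto
  finally show ?thesis .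
qed

definition ndist :: "nat \<Rightarrow> nat \<Rightarrow> nat" where
  "ndist x x' = (if x' \<le> x then x - x' else x' - x)"

lemma sum_ndist:
  fixes r :: real
  assumes "0 \<le> r" "r < 1"
  shows "(\<Sum>x'<K. r ^ ndist x x') \<le> (1 + r) / (1 - r)"
proof -
  let ?f = "\<lambda>x'. r ^ ndist x x'"
  have "(\<Sum>x'<K. ?f x') = (\<Sum>x'\<in>{..<K} \<inter> {..x}. ?f x') + (\<Sum>x'\<in>{..<K} - {..x}. ?f x')"
    by (rule sum.Int_Diff) simp
  also have "(\<Sum>x'\<in>{..<K} \<inter> {..x}. ?f x') \<le> (\<Sum>x'\<in>{..x}. ?f x')"
    using assms by (intro sum_mono2) auto
  also have "(\<Sum>x'\<in>{..x}. ?f x') = (\<Sum>x'\<le>x. r ^ (x - x'))"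
    by (intro sum.cong refl) (simp add: ndist_def)
  also have "(\<Sum>x'\<in>{..<K} - {..x}. ?f x') \<le> (\<Sum>x'\<in>(\<lambda>i. Suc x + i) ` {..<K}. ?f x')"
  proof (intro sum_mono2)
    show "{..<K} - {..x} \<subseteq> (\<lambda>i. Suc x + i) ` {..<K}"
    proof
      fix x' assume "x' \<in> {..<K} - {..x}"
      then have "x' < K" "x < x'" by auto
      then show "x' \<in> (\<lambda>i. Suc x + i) ` {..<K}"
        by (intro image_eqI[of _ _ "x' - Suc x"]) auto
    qed
  qed (use assms in auto)
  also have "(\<Sum>x'\<in>(\<lambda>i. Suc x + i) ` {..<K}. ?f x') = (\<Sum>i<K. ?f (Suc x + i))"
    by (subst sum.reindex) (auto simp: inj_on_def)
  also have "(\<Sum>i<K. ?f (Suc x + i)) = r * (\<Sum>i<K. r ^ i)"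
    by (simp add: ndist_def sum_distrib_left)
  also have "r * (\<Sum>i<K. r ^ i) \<le> r * (1 / (1 - r))"
    using geo2[OF assms] assms by (intro mult_left_mono) auto
  finally have "(\<Sum>x'<K. ?f x') \<le> 1 / (1 - r) + r * (1 / (1 - r))"
    using geo1[OF assms, of x] by linarith
  also have "\<dots> = (1 + r) / (1 - r)" by (simp add: add_divide_distrib)
  finally show ?thesis .
qed

lemma exp12: "exp (-12 :: real) \<le> 1 / 13"
proof -
  have "1 + 12 \<le> exp (12 :: real)" by (rule exp_ge_add_one_self)
  then show ?thesis by (simp add: exp_minus field_simps)
qed

lemma oneD_bound:
  fixes x K :: nat
  shows "(\<Sum>x'<K. exp (-12 * (real x - real x')\<^sup>2)) \<le> 7 / 6"
proof -
  let ?r = "exp (-12 :: real)"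
  have r0: "0 \<le> ?r" and r1: "?r < 1" using exp12 by auto
  have pw: "exp (-12 * (real x - real x')\<^sup>2) \<le> ?r ^ ndist x x'" for x'
  proof -
    have d: "(real x - real x')\<^sup>2 = (real (ndist x x'))\<^sup>2"
      by (simp add: ndist_def of_nat_diff power2_commute)
    have "real (ndist x x') \<le> (real (ndist x x'))\<^sup>2"
      by (cases "ndist x x'") (auto simp: power2_eq_square)
    then have "exp (-12 * (real x - real x')\<^sup>2) \<le> exp (real (ndist x x') * (-12))"
      unfolding d by simp
    also have "\<dots> = ?r ^ ndist x x'" by (rule exp_of_nat_mult)
    finally show ?thesis .
  qed
  have "(\<Sum>x'<K. exp (-12 * (real x - real x')\<^sup>2)) \<le> (\<Sum>x'<K. ?r ^ ndist x x')"
    by (intro sum_mono pw)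
  also have "\<dots> \<le> (1 + ?r) / (1 - ?r)" by (rule sum_ndist[OF r0 r1])
  also have "\<dots> \<le> 7 / 6" using exp12 r1 by (simp add: field_simps)
  finally show ?thesis .
qed

definition zg :: "nat \<Rightarrow> nat \<times> nat \<Rightarrow> complex" where
  "zg K t = Complex (real (fst t) / real K) (real (snd t) / real K)"

lemma grid_pointwise:
  assumes K: "K \<ge> 1" and kk: "108 * K\<^sup>2 \<le> k2" and m: "2 * k2 \<le> m"
    and t: "t \<in> {..<K} \<times> {..<K}" and t': "t' \<in> {..<K} \<times> {..<K}"
  shows "(cmod (ip (zg K t) (zg K t'))) ^ m
     \<le> exp (-12 * (real (fst t) - real (fst t'))\<^sup>2) * exp (-12 * (real (snd t) - real (snd t'))\<^sup>2)"
proof -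
  obtain x y where txy: "t = (x, y)" by (cases t)
  obtain x' y' where txy': "t' = (x', y')" by (cases t')
  have xs: "x < K" "y < K" "x' < K" "y' < K" using t t' txy txy' by auto
  let ?z = "zg K t" and ?w = "zg K t'"
  have Kp: "real K > 0" using K by simp
  have bnd: "real a / real K \<le> 1" "0 \<le> real a / real K" if "a < K" for a
    using that Kp by (auto simp: field_simps)
  have z2: "(cmod ?z)\<^sup>2 \<le> 2"
  proof -
    have "(cmod ?z)\<^sup>2 = (real x / real K)\<^sup>2 + (real y / real K)\<^sup>2"
      by (simp add: zg_def txy cmod_power2)
    also have "\<dots> \<le> 1 + 1"
      using bnd[OF xs(1)] bnd[OF xs(2)] by (intro add_mono power_le_one) auto
    finally show ?thesis by simp
  qed
  have w2: "(cmod ?w)\<^sup>2 \<le> 2"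
  proof -
    have "(cmod ?w)\<^sup>2 = (real x' / real K)\<^sup>2 + (real y' / real K)\<^sup>2"
      by (simp add: zg_def txy' cmod_power2)
    also have "\<dots> \<le> 1 + 1"
      using bnd[OF xs(3)] bnd[OF xs(4)] by (intro add_mono power_le_one) auto
    finally show ?thesis by simp
  qed
  define d2 where "d2 = (real x - real x')\<^sup>2 + (real y - real y')\<^sup>2"
  have d20: "d2 \<ge> 0" unfolding d2_def by simp
  have zw: "(cmod (?z - ?w))\<^sup>2 = d2 / (real K)\<^sup>2"
  proof -
    have "(cmod (?z - ?w))\<^sup>2 = (real x / real K - real x' / real K)\<^sup>2 + (real y / real K - real y' / real K)\<^sup>2"
      by (simp add: zg_def txy txy' cmod_power2)
    also have "\<dots> = d2 / (real K)\<^sup>2"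
      unfolding d2_def using Kp by (simp add: power2_eq_square field_simps)
    finally show ?thesis .
  qed
  define D where "D = (cmod (?z - ?w))\<^sup>2 / ((1 + (cmod ?z)\<^sup>2) * (1 + (cmod ?w)\<^sup>2))"
  have den: "0 < (1 + (cmod ?z)\<^sup>2) * (1 + (cmod ?w)\<^sup>2)" "(1 + (cmod ?z)\<^sup>2) * (1 + (cmod ?w)\<^sup>2) \<le> 9"
  proof -
    show "0 < (1 + (cmod ?z)\<^sup>2) * (1 + (cmod ?w)\<^sup>2)" by (intro mult_pos_pos) (auto intro: add_pos_nonneg)
    have "(1 + (cmod ?z)\<^sup>2) * (1 + (cmod ?w)\<^sup>2) \<le> 3 * 3"
      using z2 w2 by (intro mult_mono) auto
    then show "(1 + (cmod ?z)\<^sup>2) * (1 + (cmod ?w)\<^sup>2) \<le> 9" by simp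
  qed
  have DL: "D \<ge> (cmod (?z - ?w))\<^sup>2 / 9"
    unfolding D_def using den by (intro divide_left_mono) auto
  have c2: "(cmod (ip ?z ?w))\<^sup>2 = 1 - D" unfolding D_def by (rule cmod_ip_sq)
  have c0: "0 \<le> cmod (ip ?z ?w)" and c1: "cmod (ip ?z ?w) \<le> 1" using cmod_ip_le1 by auto
  have "(cmod (ip ?z ?w)) ^ m \<le> (cmod (ip ?z ?w)) ^ (2 * k2)"
    by (rule power_decreasing[OF m c0 c1])
  also have "\<dots> = (1 - D) ^ k2" by (simp add: power_mult c2)
  also have "\<dots> \<le> exp (- D) ^ k2"
  proof (rule power_mono)
    show "1 - D \<le> exp (- D)" using exp_ge_add_one_self[of "-D"] by simp
    show "0 \<le> 1 - D" using c2[symmetric] by simp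
  qed
  also have "\<dots> = exp (real k2 * (- D))" by (rule exp_of_nat_mult[symmetric])
  also have "\<dots> \<le> exp (-12 * d2)"
  proof -
    have "real k2 * ((cmod (?z - ?w))\<^sup>2 / 9) = real k2 * d2 / (9 * (real K)\<^sup>2)"
      by (simp add: zw)
    also have "\<dots> \<ge> 12 * d2"
    proof -
      have "108 * (real K)\<^sup>2 \<le> real k2" using of_nat_le_iff[of "108 * K\<^sup>2" k2, THEN iffD2, OF kk] by simp
      then have "12 * d2 * (9 * (real K)\<^sup>2) \<le> real k2 * d2"
        using mult_left_mono[OF _ d20, of "108 * (real K)\<^sup>2" "real k2"] by (simp add: algebra_simps)
      then show ?thesis using Kp by (simp add: field_simps)
    qed
    finally have "12 * d2 \<le> real k2 * ((cmod (?z - ?w))\<^sup>2 / 9)" .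
    also have "\<dots> \<le> real k2 * D" using DL by (intro mult_left_mono) auto
    finally show ?thesis by simp
  qed
  also have "\<dots> = exp (-12 * (real x - real x')\<^sup>2) * exp (-12 * (real y - real y')\<^sup>2)"
    unfolding d2_def by (simp add: exp_add[symmetric] algebra_simps)
  finally show ?thesis by (simp add: txy txy')
qed

lemma grid_bound:
  assumes K: "K \<ge> 1" and kk: "108 * K\<^sup>2 \<le> k2" and m: "2 * k2 \<le> m"
    and t: "t \<in> {..<K} \<times> {..<K}"
  shows "(\<Sum>t'\<in>{..<K} \<times> {..<K}. (cmod (ip (zg K t) (zg K t'))) ^ m) \<le> 49 / 36"
proof -
  have "(\<Sum>t'\<in>{..<K} \<times> {..<K}. (cmod (ip (zg K t) (zg K t'))) ^ m)
     \<le> (\<Sum>t'\<in>{..<K} \<times> {..<K}. exp (-12 * (real (fst t) - real (fst t'))\<^sup>2) * exp (-12 * (real (snd t) - real (snd t'))\<^sup>2))"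
    by (intro sum_mono grid_pointwise[OF K kk m t])
  also have "\<dots> = (\<Sum>x'<K. exp (-12 * (real (fst t) - real x')\<^sup>2)) * (\<Sum>y'<K. exp (-12 * (real (snd t) - real y')\<^sup>2))"
    by (simp add: sum_product sum.cartesian_product split_def)
  also have "\<dots> \<le> (7/6) * (7/6)"
    by (intro mult_mono oneD_bound) (auto intro: sum_nonneg)
  finally show ?thesis by simp
qed

definition grid :: "nat \<Rightarrow> (nat \<times> nat) set" where
  "grid K = {..<K} \<times> {..<K}"

definition psiraw :: "nat \<Rightarrow> nat \<Rightarrow> nat \<Rightarrow> complex" where
  "psiraw N K i = (\<Sum>t\<in>grid K. pv (zg K t) N i)"

definition Zsq :: "nat \<Rightarrow> nat \<Rightarrow> real" where
  "Zsq N K = (\<Sum>i<(2::nat) ^ N. (cmod (psiraw N K i))\<^sup>2)"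

definition cc :: "nat \<Rightarrow> nat \<Rightarrow> complex" where
  "cc N K = complex_of_real (1 / sqrt (Zsq N K))"

definition psi :: "nat \<Rightarrow> nat \<Rightarrow> complex vec" where
  "psi N K = vec (2 ^ N) (\<lambda>i. cc N K * psiraw N K i)"

lemma finite_grid[simp]: "finite (grid K)" by (simp add: grid_def)

lemma card_grid: "card (grid K) = K * K" by (simp add: grid_def card_cartesian_product)

lemma cmod_ip_sym: "cmod (ip w z) = cmod (ip z w)"
  by (metis cnj_ip complex_mod_cnj)

lemma ip_kernel_bound:
  assumes K: "K \<ge> 1" and kk: "108 * K\<^sup>2 \<le> k2" and m: "2 * k2 \<le> m" and t: "t \<in> grid K"
  shows "(\<Sum>t'\<in>grid K. cmod (\<Sum>b<(2::nat) ^ m. pv (zg K t) m b * cnj (pv (zg K t') m b))) \<le> 49 / 36"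
    and "(\<Sum>t'\<in>grid K. cmod (\<Sum>b<(2::nat) ^ m. pv (zg K t') m b * cnj (pv (zg K t) m b))) \<le> 49 / 36"
proof -
  have "(\<Sum>t'\<in>grid K. cmod (\<Sum>b<(2::nat) ^ m. pv (zg K t) m b * cnj (pv (zg K t') m b)))
      = (\<Sum>t'\<in>grid K. (cmod (ip (zg K t) (zg K t'))) ^ m)"
    by (simp add: gram_pv norm_power)
  also have "\<dots> \<le> 49 / 36" using grid_bound[OF K kk m] t by (simp add: grid_def)
  finally show "(\<Sum>t'\<in>grid K. cmod (\<Sum>b<(2::nat) ^ m. pv (zg K t) m b * cnj (pv (zg K t') m b))) \<le> 49 / 36" .
  have "(\<Sum>t'\<in>grid K. cmod (\<Sum>b<(2::nat) ^ m. pv (zg K t') m b * cnj (pv (zg K t) m b)))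
      = (\<Sum>t'\<in>grid K. (cmod (ip (zg K t) (zg K t'))) ^ m)"
    by (simp add: gram_pv norm_power cmod_ip_sym)
  also have "\<dots> \<le> 49 / 36" using grid_bound[OF K kk m] t by (simp add: grid_def)
  finally show "(\<Sum>t'\<in>grid K. cmod (\<Sum>b<(2::nat) ^ m. pv (zg K t') m b * cnj (pv (zg K t) m b))) \<le> 49 / 36" .
qed

lemma Zsq_lower:
  assumes K: "K \<ge> 1" and kk: "108 * K\<^sup>2 \<le> k2" and m: "2 * k2 \<le> N"
  shows "Zsq N K \<ge> 23 / 36 * real (K * K)"
proof -
  have "complex_of_real (Zsq N K) = (\<Sum>t\<in>grid K. \<Sum>t'\<in>grid K. 1 * cnj 1 * (\<Sum>i<(2::nat) ^ N. pv (zg K t) N i * cnj (pv (zg K t') N i)))"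
    unfolding Zsq_def psiraw_def
    using gram_expand[of "grid K" "{..<(2::nat) ^ N}" "\<lambda>_. 1" "\<lambda>t i. pv (zg K t) N i"] by simp
  also have "\<dots> = (\<Sum>t\<in>grid K. \<Sum>t'\<in>grid K. ip (zg K t) (zg K t') ^ N)"
    by (simp add: gram_pv)
  finally have ZE: "Zsq N K = (\<Sum>t\<in>grid K. Re (\<Sum>t'\<in>grid K. ip (zg K t) (zg K t') ^ N))"
    by (metis Re_complex_of_real Re_sum)
  have each: "Re (\<Sum>t'\<in>grid K. ip (zg K t) (zg K t') ^ N) \<ge> 23 / 36" if t: "t \<in> grid K" for t
  proof -
    let ?g = "\<lambda>t'. ip (zg K t) (zg K t') ^ N"
    have split: "(\<Sum>t'\<in>grid K. ?g t') = ?g t + (\<Sum>t'\<in>grid K - {t}. ?g t')"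
      using t by (simp add: sum.remove)
    have splitn: "(\<Sum>t'\<in>grid K. cmod (?g t')) = cmod (?g t) + (\<Sum>t'\<in>grid K - {t}. cmod (?g t'))"
      using t by (simp add: sum.remove)
    have g1: "?g t = 1" by (simp add: ip_self)
    have tot: "(\<Sum>t'\<in>grid K. cmod (?g t')) \<le> 49 / 36"
      using grid_bound[OF K kk m] t by (simp add: grid_def norm_power)
    have "- Re (\<Sum>t'\<in>grid K - {t}. ?g t') \<le> cmod (\<Sum>t'\<in>grid K - {t}. ?g t')"
      by (metis abs_Re_le_cmod abs_le_iff)
    also have "\<dots> \<le> (\<Sum>t'\<in>grid K - {t}. cmod (?g t'))" by (rule norm_sum)
    finally show ?thesis using split splitn g1 tot by simp
  qed
  have "(\<Sum>t\<in>grid K. (23 / 36 :: real)) \<le> (\<Sum>t\<in>grid K. Re (\<Sum>t'\<in>grid K. ip (zg K t) (zg K t') ^ N))"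
    by (intro sum_mono each)
  then show ?thesis unfolding ZE by (simp add: card_grid)
qed

lemma Zsq_pos:
  assumes K: "K \<ge> 1" and kk: "108 * K\<^sup>2 \<le> k2" and m: "2 * k2 \<le> N"
  shows "Zsq N K > 0"
proof -
  have "23 / 36 * real (K * K) > 0" using K by simp
  then show ?thesis using Zsq_lower[OF assms] by linarith
qed

lemma pv_perm:
  fixes i N :: nat and p :: "nat \<Rightarrow> nat"
  assumes p: "p permutes {..<N}"
  shows "pv z N (perm_index p N i) = pv z N i"
proof -
  have "pv z N (perm_index p N i) = (\<Prod>j<N. amp z (bit i (p j)))"
    unfolding pv_def by (intro prod.cong refl) (simp add: bit_perm_index)
  also have "\<dots> = (\<Prod>j<N. amp z (bit i j))"
    using prod.permute[OF p, of "\<lambda>j. amp z (bit i j)"] unfolding comp_def by simp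
  finally show ?thesis unfolding pv_def .
qed

lemma psi_sym: "psi N K \<in> symmetric_subspace N"
  unfolding symmetric_subspace_def
proof (intro CollectI conjI allI impI)
  show "dim_vec (psi N K) = 2 ^ N" by (simp add: psi_def)
  fix p and i :: nat assume p: "p permutes {..<N}" and i: "i < 2 ^ N"
  have pi: "perm_index p N i < 2 ^ N" by (rule perm_index_lt)
  show "psi N K $ i = psi N K $ perm_index p N i"
    unfolding psi_def using i pi by (simp add: psiraw_def pv_perm[OF p])
qed

lemma psi_pure:
  assumes "Zsq N K > 0"
  shows "pure_state N (psi N K)"
  unfolding pure_state_def
proof
  show "dim_vec (psi N K) = 2 ^ N" by (simp add: psi_def)
  have "(\<Sum>i<2 ^ N. (cmod (psi N K $ i))\<^sup>2) = (\<Sum>i<2 ^ N. (cmod (psiraw N K i))\<^sup>2 / Zsq N K)"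
    using assms by (intro sum.cong refl) (simp add: psi_def cc_def norm_divide power_divide)
  also have "\<dots> = 1" using assms by (simp add: sum_divide_distrib[symmetric] Zsq_def)
  finally show "(\<Sum>i<2 ^ N. (cmod (psi N K $ i))\<^sup>2) = 1" .
qed


lemma pv_split:
  fixes a b :: nat
  assumes a: "a < 2 ^ k"
  shows "pv z (k + n) (a + 2 ^ k * b) = pv z k a * pv z n b"
  unfolding pv_def prod_lessThan_add_split
  using a by (simp add: bit_split)

lemma trace_similar:
  fixes A B P Q :: "'a :: comm_ring_1 mat"
  assumes A: "A \<in> carrier_mat d d" and B: "B \<in> carrier_mat d d"
    and P: "P \<in> carrier_mat d d" and Q: "Q \<in> carrier_mat d d"
    and QP: "Q * P = 1\<^sub>m d" and APBQ: "A = P * B * Q"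
  shows "(\<Sum>i<d. A $$ (i, i)) = (\<Sum>i<d. B $$ (i, i))"
proof -
  have Ai: "A $$ (i, i) = (\<Sum>j<d. \<Sum>l<d. P $$ (i, l) * B $$ (l, j) * Q $$ (j, i))" if i: "i < d" for i
  proof -
    have "A $$ (i, i) = (\<Sum>l<d. P $$ (i, l) * (\<Sum>j<d. B $$ (l, j) * Q $$ (j, i)))"
      unfolding APBQ using i P B Q
      by (simp add: index_mult_mat scalar_prod_def atLeast0LessThan)
    also have "\<dots> = (\<Sum>l<d. \<Sum>j<d. P $$ (i, l) * B $$ (l, j) * Q $$ (j, i))"
      by (simp add: sum_distrib_left mult.assoc)
    also have "\<dots> = (\<Sum>j<d. \<Sum>l<d. P $$ (i, l) * B $$ (l, j) * Q $$ (j, i))"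
      by (rule sum.swap)
    finally show ?thesis .
  qed
  have QPe: "(\<Sum>i<d. Q $$ (j, i) * P $$ (i, l)) = (if j = l then 1 else 0)" if "j < d" "l < d" for j l
  proof -
    have "(Q * P) $$ (j, l) = (\<Sum>i<d. Q $$ (j, i) * P $$ (i, l))"
      using that P Q by (simp add: index_mult_mat scalar_prod_def atLeast0LessThan)
    then show ?thesis using QP that by simp
  qed
  have "(\<Sum>i<d. A $$ (i, i)) = (\<Sum>i<d. \<Sum>j<d. \<Sum>l<d. P $$ (i, l) * B $$ (l, j) * Q $$ (j, i))"
    by (intro sum.cong refl Ai) simp
  also have "\<dots> = (\<Sum>j<d. \<Sum>i<d. \<Sum>l<d. P $$ (i, l) * B $$ (l, j) * Q $$ (j, i))"
    by (rule sum.swap)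
  also have "\<dots> = (\<Sum>j<d. \<Sum>l<d. \<Sum>i<d. P $$ (i, l) * B $$ (l, j) * Q $$ (j, i))"
    by (rule sum.cong[OF refl], rule sum.swap)
  also have "\<dots> = (\<Sum>j<d. \<Sum>l<d. B $$ (l, j) * (\<Sum>i<d. Q $$ (j, i) * P $$ (i, l)))"
    by (simp add: sum_distrib_left mult_ac)
  also have "\<dots> = (\<Sum>j<d. \<Sum>l<d. B $$ (l, j) * (if j = l then 1 else 0))"
    by (intro sum.cong refl) (simp add: QPe)
  also have "\<dots> = (\<Sum>j<d. B $$ (j, j))"
    by (simp add: if_distrib cong: if_cong)
  finally show ?thesis .
qed

lemma sum_list_Re_mult: "sum_list (map (\<lambda>a. Re a * c) as) = Re (sum_list as) * (c :: real)"
  by (induction as) (auto simp: algebra_simps)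

lemma proots_linear_prod: "proots (\<Prod>a\<leftarrow>as. [:- a, 1:]) = mset (as :: complex list)"
proof -
  have "proots (\<Prod>p\<leftarrow>map (\<lambda>a. [:- a, 1:]) as. p) = sum_list (map proots (map (\<lambda>a. [:- a, 1:]) as))"
    by (rule proots_prod_list) auto
  also have "\<dots> = mset as" by (induction as) auto
  finally show ?thesis by (simp add: comp_def)
qed


lemma psi_idx:
  fixes a b :: nat
  assumes N: "N = k + n" and a: "a < 2 ^ k" and b: "b < 2 ^ n"
  shows "psi N K $ (a + 2 ^ k * b) = cc N K * (\<Sum>t\<in>grid K. pv (zg K t) k a * pv (zg K t) n b)"
proof -
  have "a + 2 ^ k * b < 2 ^ k * 2 ^ n" by (rule lt_mult_index[OF a b])
  then have lt: "a + 2 ^ k * b < 2 ^ N" by (simp add: N power_add)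
  show ?thesis using lt by (simp add: psi_def psiraw_def N pv_split[OF a])
qed

lemma eig_bound:
  assumes K: "K \<ge> 1" and kk: "108 * K\<^sup>2 \<le> N div 2 div 2"
    and v: "v \<in> carrier_vec (2 ^ (N div 2))" and v0: "v \<noteq> 0\<^sub>v (2 ^ (N div 2))"
    and ev: "reduced_density N (N div 2) (psi N K) *\<^sub>v v = lam \<cdot>\<^sub>v v"
  shows "Im lam = 0 \<and> 0 \<le> Re lam \<and> Re lam \<le> (49 / 36)\<^sup>2 / Zsq N K"
proof -
  define k where "k = N div 2"
  define n where "n = N - k"
  define k2 where "k2 = k div 2"
  have N: "N = k + n" unfolding n_def k_def by simp
  have kk': "108 * K\<^sup>2 \<le> k2" using kk unfolding k2_def k_def .
  have mk: "2 * k2 \<le> k" unfolding k2_def by simp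
  have mn: "2 * k2 \<le> n" unfolding k2_def n_def k_def by simp
  have mN: "2 * k2 \<le> N" unfolding k2_def N by simp
  have Zp: "Zsq N K > 0" by (rule Zsq_pos[OF K kk' mN])
  define \<rho> where "\<rho> = reduced_density N k (psi N K)"
  define ps where "ps a b = psi N K $ (a + 2 ^ k * b)" for a b :: nat
  have dv: "dim_vec v = 2 ^ k" using v unfolding k_def by simp
  have rho_ent: "\<rho> $$ (a, a') = (\<Sum>b<2 ^ n. ps a b * cnj (ps a' b))" if "a < 2 ^ k" "a' < 2 ^ k" for a a'
    using that unfolding \<rho>_def reduced_density_def ps_def n_def by simp
  have rho_dim: "dim_row \<rho> = 2 ^ k" "dim_col \<rho> = 2 ^ k" unfolding \<rho>_def reduced_density_def by simp_all
  define V where "V = (\<Sum>a<2 ^ k. (cmod (v $ a))\<^sup>2)"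
  define u where "u b = (\<Sum>a<2 ^ k. cnj (v $ a) * ps a b)" for b
  define Sb where "Sb = (\<Sum>b<2 ^ n. (cmod (u b))\<^sup>2)"
  have Vpos: "V > 0"
  proof -
    have "\<exists>a<2 ^ k. v $ a \<noteq> 0"
    proof (rule ccontr)
      assume "\<not> (\<exists>a<2 ^ k. v $ a \<noteq> 0)"
      then have "v = 0\<^sub>v (2 ^ (N div 2))" using dv by (intro eq_vecI) (auto simp: k_def)
      with v0 show False by simp
    qed
    then obtain a where a: "a < 2 ^ k" "v $ a \<noteq> 0" by blast
    have "(cmod (v $ a))\<^sup>2 > 0" using a by simp
    also have "(cmod (v $ a))\<^sup>2 \<le> V" unfolding V_def
      using a by (intro member_le_sum) auto
    finally show ?thesis .
  qed
  have Sb0: "Sb \<ge> 0" unfolding Sb_def by (simp add: sum_nonneg)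
  define Qv where "Qv = (\<Sum>a<2 ^ k. cnj (v $ a) * (\<rho> *\<^sub>v v) $ a)"
  have Q1: "Qv = lam * complex_of_real V"
  proof -
    have "Qv = (\<Sum>a<2 ^ k. lam * (cnj (v $ a) * v $ a))"
      unfolding Qv_def using ev dv by (intro sum.cong refl) (simp add: \<rho>_def k_def)
    also have "\<dots> = (\<Sum>a<2 ^ k. lam * complex_of_real ((cmod (v $ a))\<^sup>2))"
      by (intro sum.cong refl) (metis cmod_sq_cnj mult.commute)
    also have "\<dots> = lam * complex_of_real V"
      by (simp only: V_def of_real_sum sum_distrib_left)
    finally show ?thesis .
  qed
  have Q2: "Qv = complex_of_real Sb"
  proof -
    have "Qv = (\<Sum>a<2 ^ k. \<Sum>a'<2 ^ k. cnj (v $ a) * cnj (cnj (v $ a')) * (\<Sum>b<2 ^ n. ps a b * cnj (ps a' b)))"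
      unfolding Qv_def
    proof (intro sum.cong refl)
      fix a :: nat assume a: "a \<in> {..<2 ^ k}"
      have "(\<rho> *\<^sub>v v) $ a = (\<Sum>a'<2 ^ k. \<rho> $$ (a, a') * v $ a')"
        using a rho_dim dv by (simp add: index_mult_mat_vec scalar_prod_def atLeast0LessThan)
      also have "\<dots> = (\<Sum>a'<2 ^ k. (\<Sum>b<2 ^ n. ps a b * cnj (ps a' b)) * v $ a')"
        using a by (intro sum.cong refl) (simp add: rho_ent)
      finally show "cnj (v $ a) * (\<rho> *\<^sub>v v) $ a = (\<Sum>a'<2 ^ k. cnj (v $ a) * cnj (cnj (v $ a')) * (\<Sum>b<2 ^ n. ps a b * cnj (ps a' b)))"
        by (simp add: sum_distrib_left mult_ac)
    qed
    also have "\<dots> = complex_of_real Sb"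
      unfolding Sb_def u_def
      by (rule gram_expand[of "{..<2 ^ k}" "{..<2 ^ n}" "\<lambda>a. cnj (v $ a)" ps, symmetric]) auto
    finally show ?thesis .
  qed
  have lamE: "lam = complex_of_real (Sb / V)"
    using Q1 Q2 Vpos by (simp add: field_simps)
  define A where "A t = (\<Sum>a<2 ^ k. cnj (v $ a) * pv (zg K t) k a)" for t
  have uE: "u b = (\<Sum>t\<in>grid K. (cc N K * A t) * pv (zg K t) n b)" if b: "b < 2 ^ n" for b
  proof -
    have "u b = (\<Sum>a<2 ^ k. cnj (v $ a) * (cc N K * (\<Sum>t\<in>grid K. pv (zg K t) k a * pv (zg K t) n b)))"
      unfolding u_def ps_def by (intro sum.cong refl) (simp add: psi_idx[OF N _ b])
    also have "\<dots> = (\<Sum>t\<in>grid K. (cc N K * A t) * pv (zg K t) n b)"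
      unfolding A_def by (simp add: sum_distrib_left sum_distrib_right mult_ac sum.swap[of _ "grid K"])
    finally show ?thesis .
  qed
  have "Sb = (\<Sum>b<2 ^ n. (cmod (\<Sum>t\<in>grid K. (cc N K * A t) * pv (zg K t) n b))\<^sup>2)"
    unfolding Sb_def by (intro sum.cong refl) (simp add: uE)
  also have "\<dots> \<le> 49 / 36 * (\<Sum>t\<in>grid K. (cmod (cc N K * A t))\<^sup>2)"
    by (rule sum_sq_bound[OF finite_grid finite_lessThan ip_kernel_bound(1)[OF K kk' mn] ip_kernel_bound(2)[OF K kk' mn]])
  also have "(\<Sum>t\<in>grid K. (cmod (cc N K * A t))\<^sup>2) = (\<Sum>t\<in>grid K. (cmod (A t))\<^sup>2) / Zsq N K"
    using Zp by (simp add: cc_def norm_divide power_divide sum_divide_distrib)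
  also have "(\<Sum>t\<in>grid K. (cmod (A t))\<^sup>2) \<le> 49 / 36 * V"
    unfolding A_def V_def
    by (rule frame_bound[OF finite_grid finite_lessThan _ ip_kernel_bound(1)[OF K kk' mk] ip_kernel_bound(2)[OF K kk' mk]]) simp
  finally have "Sb \<le> 49 / 36 * (49 / 36 * V / Zsq N K)"
    using Zp by (simp add: divide_right_mono)
  then have "Sb / V \<le> (49 / 36)\<^sup>2 / Zsq N K"
    using Vpos Zp by (simp add: field_simps power2_eq_square)
  then show ?thesis using lamE Sb0 Vpos by simp
qed

lemma entropy_lower:
  assumes K: "K \<ge> 1" and kk: "108 * K\<^sup>2 \<le> N div 2 div 2"
  shows "ent_entropy N (N div 2) (psi N K) \<ge> log 2 (Zsq N K / (49 / 36)\<^sup>2)"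
proof -
  define k where "k = N div 2"
  define n where "n = N - k"
  define k2 where "k2 = k div 2"
  have N: "N = k + n" unfolding n_def k_def by simp
  have kk': "108 * K\<^sup>2 \<le> k2" using kk unfolding k2_def k_def .
  have mN: "2 * k2 \<le> N" unfolding k2_def N by simp
  have Zp: "Zsq N K > 0" by (rule Zsq_pos[OF K kk' mN])
  define \<rho> where "\<rho> = reduced_density N k (psi N K)"
  define d where "d = (2::nat) ^ k"
  have carr: "\<rho> \<in> carrier_mat d d" unfolding \<rho>_def reduced_density_def d_def by simp
  obtain as where cp: "char_poly \<rho> = (\<Prod>a\<leftarrow>as. [:- a, 1:])" and len: "length as = d"
    using char_poly_factorized[OF carr] by blast
  obtain B P Q where sd: "schur_decomposition \<rho> as = (B, P, Q)" by (metis prod_cases3)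
  from schur_decomposition[OF carr cp sd]
  have sim: "similar_mat_wit \<rho> B P Q" and dg: "diag_mat B = as" by auto
  have dr: "dim_row \<rho> = d" using carr by simp
  from sim have Bc: "B \<in> carrier_mat d d" and Pc: "P \<in> carrier_mat d d" and Qc: "Q \<in> carrier_mat d d"
    and QP: "Q * P = 1\<^sub>m d" and rPBQ: "\<rho> = P * B * Q"
    unfolding similar_mat_wit_def Let_def dr by auto
  have tr1: "(\<Sum>i<d. \<rho> $$ (i, i)) = 1"
  proof -
    have "(\<Sum>i<d. \<rho> $$ (i, i)) = (\<Sum>i<2 ^ k. complex_of_real (\<Sum>b<2 ^ n. (cmod (psi N K $ (i + 2 ^ k * b)))\<^sup>2))"
      unfolding d_def \<rho>_def reduced_density_def n_def
      by (intro sum.cong refl) (simp add: of_real_sum cmod_sq_cnj del: of_real_power)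
    also have "\<dots> = complex_of_real (\<Sum>b<2 ^ n. \<Sum>i<2 ^ k. (cmod (psi N K $ (i + 2 ^ k * b)))\<^sup>2)"
      by (simp add: of_real_sum[symmetric] sum.swap[of _ "{..<2 ^ k}"])
    also have "(\<Sum>b<2 ^ n. \<Sum>i<2 ^ k. (cmod (psi N K $ (i + 2 ^ k * b)))\<^sup>2) = (\<Sum>x<2 ^ k * 2 ^ n. (cmod (psi N K $ x))\<^sup>2)"
      by (rule sum_mult_index[symmetric])
    also have "\<dots> = 1" using psi_pure[OF Zp] unfolding pure_state_def by (simp add: N power_add)
    finally show ?thesis by simp
  qed
  have sl: "sum_list as = 1"
  proof -
    have "sum_list as = (\<Sum>i<d. B $$ (i, i))"
      unfolding dg[symmetric] diag_mat_def using Bc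
      by (simp add: interv_sum_list_conv_sum_set_nat atLeast0LessThan)
    also have "\<dots> = (\<Sum>i<d. \<rho> $$ (i, i))"
      by (rule trace_similar[OF carr Bc Pc Qc QP rPBQ, symmetric])
    finally show ?thesis using tr1 by simp
  qed
  define L where "L = (49 / 36)\<^sup>2 / Zsq N K"
  have Lp: "L > 0" unfolding L_def using Zp by simp
  define h where "h lam = (if Re lam = 0 then 0 else Re lam * log 2 (Re lam))" for lam :: complex
  have hb: "h a \<le> Re a * log 2 L" if a: "a \<in> set as" for a
  proof -
    have "poly (char_poly \<rho>) a = 0" unfolding cp using a by (rule linear_poly_root)
    then have "eigenvalue \<rho> a" using eigenvalue_root_char_poly[OF carr] by simp
    then obtain w where w: "eigenvector \<rho> w a" unfolding eigenvalue_def by blast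
    then have wc: "w \<in> carrier_vec (2 ^ (N div 2))" and w0: "w \<noteq> 0\<^sub>v (2 ^ (N div 2))"
      and we: "reduced_density N (N div 2) (psi N K) *\<^sub>v w = a \<cdot>\<^sub>v w"
      using w unfolding eigenvector_def \<rho>_def k_def by (auto simp: reduced_density_def)
    from eig_bound[OF K kk wc w0 we]
    have a0: "0 \<le> Re a" and aL: "Re a \<le> L" unfolding L_def by auto
    show ?thesis
    proof (cases "Re a = 0")
      case True then show ?thesis by (simp add: h_def)
    next
      case False
      then have ap: "Re a > 0" using a0 by simp
      have "log 2 (Re a) \<le> log 2 L" by (rule log_mono) (use ap aL in auto)
      then show ?thesis using False ap by (simp add: h_def mult_left_mono)
    qed
  qed
  have e0: "vn_entropy \<rho> = - (\<Sum>lam\<in>#mset as. h lam)"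
    unfolding vn_entropy_def cp proots_linear_prod h_def by (rule refl)
  have e1: "(\<Sum>lam\<in>#mset as. h lam) = sum_list (map h as)"
    by (simp only: mset_map[symmetric] sum_mset_sum_list)
  have "sum_list (map h as) \<le> sum_list (map (\<lambda>a. Re a * log 2 L) as)"
    by (rule sum_list_mono) (rule hb)
  also have "\<dots> = log 2 L" by (simp add: sum_list_Re_mult sl)
  finally have e2: "sum_list (map h as) \<le> log 2 L" .
  have "- log 2 L \<le> vn_entropy \<rho>" using e0 e1 e2 by linarith
  also have "- log 2 L = log 2 (Zsq N K / (49 / 36)\<^sup>2)"
    unfolding L_def using Zp by (simp add: log_divide_pos)
  finally show ?thesis unfolding ent_entropy_def \<rho>_def k_def .
qed


lemma K_choice:
  fixes k2 :: nat
  assumes "k2 \<ge> 108"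
  shows "floor_sqrt (k2 div 108) \<ge> 1 \<and> 108 * (floor_sqrt (k2 div 108))\<^sup>2 \<le> k2
         \<and> k2 + 1 \<le> 432 * (floor_sqrt (k2 div 108))\<^sup>2"
proof -
  define q where "q = k2 div 108"
  define K where "K = floor_sqrt q"
  have q1: "q \<ge> 1" using assms unfolding q_def by simp
  have K1: "K \<ge> 1" unfolding K_def using q1 by (simp add: Suc_le_eq)
  have "K\<^sup>2 \<le> q" unfolding K_def by simp
  then have a: "108 * K\<^sup>2 \<le> k2" unfolding q_def by linarith
  have "q < (Suc K)\<^sup>2" unfolding K_def by (rule Suc_floor_sqrt_power2_gt)
  then have "Suc q \<le> (Suc K)\<^sup>2" by simp
  moreover have "(Suc K)\<^sup>2 \<le> 4 * K\<^sup>2"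
  proof -
    have h: "K \<le> K * K" using K1 by simp
    have e1: "(Suc K)\<^sup>2 = K * K + 2 * K + 1" by (simp add: power2_eq_square)
    have e2: "4 * K\<^sup>2 = 4 * (K * K)" by (simp add: power2_eq_square)
    show ?thesis unfolding e1 e2 using h K1 by linarith
  qed
  moreover have "k2 < 108 * Suc q"
  proof -
    have e: "k2 = 108 * q + k2 mod 108" unfolding q_def by simp
    have "k2 mod 108 < 108" by simp
    then show ?thesis using e by simp
  qed
  ultimately have "k2 + 1 \<le> 432 * K\<^sup>2"
  proof -
    assume a1: "Suc q \<le> (Suc K)\<^sup>2" and a2: "(Suc K)\<^sup>2 \<le> 4 * K\<^sup>2" and a3: "k2 < 108 * Suc q"
    have "108 * Suc q \<le> 108 * (Suc K)\<^sup>2" using a1 by (rule mult_le_mono2)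
    also have "\<dots> \<le> 108 * (4 * K\<^sup>2)" using a2 by (rule mult_le_mono2)
    finally show ?thesis using a3 by simp
  qed
  then show ?thesis using K1 a unfolding K_def q_def by simp
qed

theorem mainTheorem1:
  shows "\<exists>\<delta>::real. \<delta> > 0 \<and> (\<exists>Nstar::real. Nstar > 0 \<and>
    (\<forall>N::nat. real N > Nstar \<longrightarrow>
      (\<exists>psi. pure_state N psi \<and> psi \<in> symmetric_subspace N \<and>
         log 2 (real (N div 2) + 1) - ent_entropy N (N div 2) psi < \<delta>)))"
proof (intro exI conjI allI impI)
  show "(12::real) > 0" by simp
  show "(432::real) > 0" by simp
  fix N :: nat assume NN: "real N > 432"
  define k where "k = N div 2"
  define k2 where "k2 = k div 2"
  have k2b: "k2 \<ge> 108" using NN unfolding k2_def k_def by simp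
  define K where "K = floor_sqrt (k2 div 108)"
  from K_choice[OF k2b] have K1: "K \<ge> 1" and kk: "108 * K\<^sup>2 \<le> k2" and ku: "k2 + 1 \<le> 432 * K\<^sup>2"
    unfolding K_def by auto
  have kk': "108 * K\<^sup>2 \<le> N div 2 div 2" using kk unfolding k2_def k_def .
  have mN: "2 * k2 \<le> N" unfolding k2_def k_def by simp
  have Zl: "Zsq N K \<ge> 23 / 36 * real (K * K)" by (rule Zsq_lower[OF K1 kk mN])
  have Zp: "Zsq N K > 0" by (rule Zsq_pos[OF K1 kk mN])
  have Ent: "ent_entropy N (N div 2) (psi N K) \<ge> log 2 (Zsq N K / (49 / 36)\<^sup>2)"
    by (rule entropy_lower[OF K1 kk'])
  define R where "R = real (K * K)"
  have Rp: "R > 0" unfolding R_def using K1 by simp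
  have kR: "real (N div 2) + 1 \<le> 864 * R"
  proof -
    have "N div 2 \<le> 2 * k2 + 1" unfolding k2_def k_def by simp
    then have "N div 2 + 1 \<le> 864 * (K * K)" using ku by (simp add: power2_eq_square)
    then have "real (N div 2 + 1) \<le> real (864 * (K * K))" by (simp only: of_nat_le_iff)
    then show ?thesis unfolding R_def by simp
  qed
  define c where "c = (23 / 36) / (49 / 36 :: real)\<^sup>2"
  have cp: "c > 0" unfolding c_def by simp
  have Zc: "Zsq N K / (49 / 36)\<^sup>2 \<ge> c * R"
    using Zl unfolding c_def R_def by (simp add: field_simps)
  have l1: "log 2 (real (N div 2) + 1) \<le> log 2 (864 * R)"
    by (rule log_mono) (use kR in auto)
  have l2: "log 2 (c * R) \<le> log 2 (Zsq N K / (49 / 36)\<^sup>2)"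
    by (rule log_mono) (use Zc cp Rp in auto)
  have "log 2 (864 * R) - log 2 (c * R) = log 2 ((864 * R) / (c * R))"
    using cp Rp by (intro log_divide_pos[symmetric]) auto
  also have "(864 * R) / (c * R) = 864 / c" using Rp by simp
  also have "log 2 (864 / c) < 12"
  proof -
    have "864 / c < 2 powr 12" unfolding c_def by (simp add: powr_realpow power2_eq_square)
    then show ?thesis using cp by (simp add: log_less_iff)
  qed
  finally have "log 2 (864 * R) - log 2 (c * R) < 12" .
  then show "log 2 (real (N div 2) + 1) - ent_entropy N (N div 2) (psi N K) < 12"
    using l1 l2 Ent by linarith
  show "pure_state N (psi N K)" by (rule psi_pure[OF Zp])
  show "psi N K \<in> symmetric_subspace N" by (rule psi_sym)
qed

end
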